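(* Let $E$ be a locally complete complex lcHs, $G\subset E'$ a linear subspace that determines boundedness, $\nu\colon\mathbb{D}\to(0,\infty)$ continuous, and $U_*\subset\mathbb{D}$ a set having an accumulation point in $\mathbb{D}$. Let $f\colon\{0\}\cup(\{1\}\times U_* )\to E$ be a function such that for each $e'\in G$ there is $f_{e'}\in\mathcal{B}\nu(\mathbb{D})$ with $f_{e'}(0)=e'(f(0))$ and $f_{e'}'(z)=e'(f(1,z))$ for all $z\in U_*$. Then there exists a unique $F\in\mathcal{B}\nu(\mathbb{D},E)$ with $F(0)=f(0)$ and $(\partial^1_{\mathbb{C}})^EF(z)=f(1,z)$ for all $z\in U_*$.
   Context: $\mathbb{D}$ is the open unit disc in $\mathbb{C}$; "lcHs" means locally convex Hausdorff space over $\mathbb{C}$ with directed fundamental system of seminorms $(p_\alpha)_{\alpha\in\mathfrak{A}}$. $E$ is locally complete if for every closed bounded absolutely convex $D\subset E$ the space $\bigcup_n nD$ normed by the gauge of $D$ is Banach. $G\subset E'$ determines boundedness if every $\sigma(E,G)$-bounded subset of $E$ is bounded in $E$. $\mathcal{O}(\mathbb{D},E)$ is the space of holomorphic $E$-valued functions, with complex derivative $(\partial^1_{\mathbb{C}})^Ef(z):=\lim_{h\to0,h\in\mathbb{C}\setminus\{0\}}(f(z+h)-f(z))/h$. The Bloch type space is $\mathcal{B}\nu(\mathbb{D},E):=\{f\in\mathcal{O}(\mathbb{D},E):|f|_{\nu,\alpha}:=\max(p_\alpha(f(0)),\sup_{z\in\mathbb{D}}p_\alpha((\partial^1_{\mathbb{C}})^Ef(z))\nu(z))<\infty\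 \forall\alpha\}$; $\mathcal{B}\nu(\mathbb{D}):=\mathcal{B}\nu(\mathbb{D},\mathbb{C})$, and $f'$ denotes the derivative of a scalar holomorphic function. *)

theory Defs
  imports "HOL-Analysis.Analysis"
begin

class cvec = ab_group_add +
  fixes scaleC :: "complex \<Rightarrow> 'a \<Rightarrow> 'a" (infixr \<open>*\<^sub>C\<close> 75)
  assumes scaleC_add_right: "a *\<^sub>C (x + y) = a *\<^sub>C x + a *\<^sub>C y"
    and scaleC_add_left: "(a + b) *\<^sub>C x = a *\<^sub>C x + b *\<^sub>C x"
    and scaleC_scaleC: "a *\<^sub>C (b *\<^sub>C x) = (a * b) *\<^sub>C x"
    and scaleC_one: "1 *\<^sub>C x = x"

text \<open>A locally convex Hausdorff space over the complex numbers is modelled as a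
complex vector space of type 'e together with a family of seminorms p indexed by
a type 'i (the fundamental system of seminorms), which is directed and separates
points. The topology is the one induced by this family.\<close>

definition lcHs :: "('i \<Rightarrow> 'e::cvec \<Rightarrow> real) \<Rightarrow> bool" where
  "lcHs p \<longleftrightarrow>
     (\<forall>a x. 0 \<le> p a x) \<and>
     (\<forall>a x y. p a (x + y) \<le> p a x + p a y) \<and>
     (\<forall>a c x. p a (c *\<^sub>C x) = norm c * p a x) \<and>
     (\<forall>a b. \<exists>c C. \<forall>x. max (p a x) (p b x) \<le> C * p c x) \<and>
     (\<forall>x. x \<noteq> 0 \<longrightarrow> (\<exists>a. 0 < p a x))"

definition lc_dual :: "('i \<Rightarrow> 'e::cvec \<Rightarrow> real) \<Rightarrow> ('e \<Rightarrow> complex) set" where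
  "lc_dual p = {\<phi>. (\<forall>x y. \<phi> (x + y) = \<phi> x + \<phi> y) \<and> (\<forall>c x. \<phi> (c *\<^sub>C x) = c * \<phi> x) \<and>
                    (\<exists>a C. \<forall>x. norm (\<phi> x) \<le> C * p a x)}"

definition lc_bounded :: "('i \<Rightarrow> 'e::cvec \<Rightarrow> real) \<Rightarrow> 'e set \<Rightarrow> bool" where
  "lc_bounded p B \<longleftrightarrow> (\<forall>a. \<exists>C. \<forall>x\<in>B. p a x \<le> C)"

definition lc_closed :: "('i \<Rightarrow> 'e::cvec \<Rightarrow> real) \<Rightarrow> 'e set \<Rightarrow> bool" where
  "lc_closed p D \<longleftrightarrow>
     (\<forall>x. (\<forall>a. \<forall>\<epsilon>>0. \<exists>d\<in>D. p a (x - d) < \<epsilon>) \<longrightarrow> x \<in> D)"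

definition abs_convex :: "'e::cvec set \<Rightarrow> bool" where
  "abs_convex D \<longleftrightarrow>
     (\<forall>x\<in>D. \<forall>y\<in>D. \<forall>a b::complex. norm a + norm b \<le> 1 \<longrightarrow> a *\<^sub>C x + b *\<^sub>C y \<in> D)"

definition disc_span :: "'e::cvec set \<Rightarrow> 'e set" where
  "disc_span D = (\<Union>n::nat. (\<lambda>d. of_nat n *\<^sub>C d) ` D)"

definition gauge_of :: "'e::cvec set \<Rightarrow> 'e \<Rightarrow> real" where
  "gauge_of D x = Inf {t::real. 0 < t \<and> (\<exists>d\<in>D. x = complex_of_real t *\<^sub>C d)}"

definition disc_banach :: "'e::cvec set \<Rightarrow> bool" where
  "disc_banach D \<longleftrightarrow>
     (\<forall>s::nat \<Rightarrow> 'e. (\<forall>n. s n \<in> disc_span D) \<longrightarrow>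
        (\<forall>\<epsilon>>0. \<exists>N. \<forall>m\<ge>N. \<forall>n\<ge>N. gauge_of D (s m - s n) < \<epsilon>) \<longrightarrow>
        (\<exists>x\<in>disc_span D. (\<lambda>n. gauge_of D (s n - x)) \<longlonglongrightarrow> 0))"

definition locally_complete :: "('i \<Rightarrow> 'e::cvec \<Rightarrow> real) \<Rightarrow> bool" where
  "locally_complete p \<longleftrightarrow>
     (\<forall>D. lc_closed p D \<and> lc_bounded p D \<and> abs_convex D \<longrightarrow> disc_banach D)"

definition determines_boundedness ::
  "('i \<Rightarrow> 'e::cvec \<Rightarrow> real) \<Rightarrow> ('e \<Rightarrow> complex) set \<Rightarrow> bool" where
  "determines_boundedness p G \<longleftrightarrow>
     (\<forall>B. (\<forall>g\<in>G. bounded (g ` B)) \<longrightarrow> lc_bounded p B)"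

definition linear_subspace_fun :: "('e \<Rightarrow> complex) set \<Rightarrow> bool" where
  "linear_subspace_fun G \<longleftrightarrow> (\<lambda>_. 0) \<in> G \<and>
     (\<forall>g\<in>G. \<forall>h\<in>G. (\<lambda>x. g x + h x) \<in> G) \<and> (\<forall>c. \<forall>g\<in>G. (\<lambda>x. c * g x) \<in> G)"

definition lc_has_deriv ::
  "('i \<Rightarrow> 'e::cvec \<Rightarrow> real) \<Rightarrow> (complex \<Rightarrow> 'e) \<Rightarrow> 'e \<Rightarrow> complex \<Rightarrow> bool" where
  "lc_has_deriv p F d z \<longleftrightarrow>
     (\<forall>a. ((\<lambda>h. p a (inverse h *\<^sub>C (F (z + h) - F z) - d)) \<longlongrightarrow> 0) (at 0))"

definition lc_deriv :: "('i \<Rightarrow> 'e::cvec \<Rightarrow> real) \<Rightarrow> (complex \<Rightarrow> 'e) \<Rightarrow> complex \<Rightarrow> 'e" where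
  "lc_deriv p F z = (THE d. lc_has_deriv p F d z)"

definition lc_holomorphic :: "('i \<Rightarrow> 'e::cvec \<Rightarrow> real) \<Rightarrow> (complex \<Rightarrow> 'e) \<Rightarrow> bool" where
  "lc_holomorphic p F \<longleftrightarrow> (\<forall>z\<in>ball 0 1. \<exists>d. lc_has_deriv p F d z)"

definition lc_bloch ::
  "('i \<Rightarrow> 'e::cvec \<Rightarrow> real) \<Rightarrow> (complex \<Rightarrow> real) \<Rightarrow> (complex \<Rightarrow> 'e) \<Rightarrow> bool" where
  "lc_bloch p \<nu> F \<longleftrightarrow> lc_holomorphic p F \<and>
     (\<forall>a. \<exists>C. p a (F 0) \<le> C \<and> (\<forall>z\<in>ball 0 1. p a (lc_deriv p F z) * \<nu> z \<le> C))"

definition scalar_bloch :: "(complex \<Rightarrow> real) \<Rightarrow> (complex \<Rightarrow> complex) \<Rightarrow> bool" where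
  "scalar_bloch \<nu> g \<longleftrightarrow> g holomorphic_on ball 0 1 \<and>
     (\<exists>C. \<forall>z\<in>ball 0 1. norm (deriv g z) * \<nu> z \<le> C)"

end

theory Submission
  imports Defs "HOL-Complex_Analysis.Complex_Analysis"
begin


lemma scaleC_zero_left[simp]: "(0::complex) *\<^sub>C (x::'e::cvec) = 0"
proof -
  have "(0::complex) *\<^sub>C x = 0 *\<^sub>C x + 0 *\<^sub>C x" using scaleC_add_left[of 0 0 x] by simp
  then show ?thesis by simp
qed

lemma scaleC_zero_right[simp]: "a *\<^sub>C (0::'e::cvec) = 0"
proof -
  have "a *\<^sub>C (0::'e) = a *\<^sub>C 0 + a *\<^sub>C 0" using scaleC_add_right[of a 0 0] by simp
  then show ?thesis by simp
qed

lemma scaleC_minus_right: "a *\<^sub>C (- x) = - (a *\<^sub>C (x::'e::cvec))"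
proof -
  have "a *\<^sub>C x + a *\<^sub>C (- x) = 0" using scaleC_add_right[of a x "-x", symmetric] by simp
  have "a *\<^sub>C (- x) = (a *\<^sub>C x + a *\<^sub>C (- x)) - a *\<^sub>C x" by simp
  also have "\<dots> = - (a *\<^sub>C x)" using \<open>a *\<^sub>C x + a *\<^sub>C (- x) = 0\<close> by simp
  finally show ?thesis .
qed

lemma scaleC_diff_right: "a *\<^sub>C (x - y) = a *\<^sub>C x - a *\<^sub>C (y::'e::cvec)"
  by (simp only: diff_conv_add_uminus scaleC_add_right scaleC_minus_right)

lemma scaleC_inv_cancel: "c \<noteq> 0 \<Longrightarrow> c *\<^sub>C (inverse c *\<^sub>C (x::'e::cvec)) = x"
  by (simp add: scaleC_scaleC scaleC_one)

lemma lf_add: "\<phi> \<in> lc_dual p \<Longrightarrow> \<phi> (x + y) = \<phi> x + \<phi> y"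
  by (simp add: lc_dual_def)
lemma lf_scale: "\<phi> \<in> lc_dual p \<Longrightarrow> \<phi> (c *\<^sub>C x) = c * \<phi> x"
  by (simp add: lc_dual_def)
lemma lf_zero: "\<phi> \<in> lc_dual p \<Longrightarrow> \<phi> 0 = 0"
  using lf_scale[of \<phi> p 0 0] by simp
lemma lf_minus: "\<phi> \<in> lc_dual p \<Longrightarrow> \<phi> (- x) = - \<phi> x"
proof -
  assume a: "\<phi> \<in> lc_dual p"
  have "\<phi> x + \<phi> (- x) = 0" using lf_add[OF a, of x "-x"] lf_zero[OF a] by simp
  then show ?thesis by (simp add: add_eq_0_iff)
qed
lemma lf_diff: "\<phi> \<in> lc_dual p \<Longrightarrow> \<phi> (x - y) = \<phi> x - \<phi> y"
  by (simp only: diff_conv_add_uminus lf_add lf_minus)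
lemma lf_sum: "\<phi> \<in> lc_dual p \<Longrightarrow> \<phi> (\<Sum>i\<in>A. c i *\<^sub>C v i) = (\<Sum>i\<in>A. c i * \<phi> (v i))"
proof (induction A rule: infinite_finite_induct)
  case (infinite A) then show ?case by (simp add: lf_zero)
next
  case empty then show ?case by (simp add: lf_zero)
next
  case (insert x F) then show ?case by (simp add: lf_add lf_scale)
qed
lemma lf_bound: "\<phi> \<in> lc_dual p \<Longrightarrow> \<exists>a C. \<forall>x. norm (\<phi> x) \<le> C * p a x"
  by (simp add: lc_dual_def)

lemma sn_scale: "lcHs p \<Longrightarrow> p a (c *\<^sub>C x) = norm c * p a x"
  by (simp add: lcHs_def)
lemma sn_nonneg: "lcHs p \<Longrightarrow> 0 \<le> p a x"
  by (simp add: lcHs_def)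

lemma separation:
  assumes lc: "lcHs p" and det: "determines_boundedness p G" and sub: "G \<subseteq> lc_dual p"
    and eq: "\<forall>e'\<in>G. e' x = e' y"
  shows "x = y"
proof (rule ccontr)
  assume "x \<noteq> y"
  then have "x - y \<noteq> 0" by simp
  then obtain a where a: "0 < p a (x - y)" using lc unfolding lcHs_def by blast
  let ?B = "range (\<lambda>n::nat. of_nat n *\<^sub>C (x - y))"
  have "\<forall>g\<in>G. bounded (g ` ?B)"
  proof
    fix g assume "g \<in> G"
    then have "g \<in> lc_dual p" "g x = g y" using sub eq by auto
    then have "g ` ?B \<subseteq> {0}" by (auto simp: lf_scale lf_diff)
    moreover have "bounded {0::complex}" by simp
    ultimately show "bounded (g ` ?B)" using bounded_subset by blast
  qed
  then have "lc_bounded p ?B" using det unfolding determines_boundedness_def by blast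
  then obtain C where C: "\<forall>n::nat. p a (of_nat n *\<^sub>C (x - y)) \<le> C"
    unfolding lc_bounded_def by blast
  obtain n::nat where n: "C / p a (x - y) < n" using reals_Archimedean2 by blast
  have "p a (of_nat n *\<^sub>C (x - y)) = n * p a (x - y)"
    using sn_scale[OF lc] by simp
  with C[rule_format, of n] have "n * p a (x - y) \<le> C" by simp
  with n a show False by (simp add: field_simps)
qed




lemma complete_lemma:
  fixes p :: "'i \<Rightarrow> 'e::cvec \<Rightarrow> real" and s :: "nat \<Rightarrow> 'e"
  assumes lc: "lcHs p" and loc: "locally_complete p" and sub: "G \<subseteq> lc_dual p"
    and det: "determines_boundedness p G"
    and M0: "\<forall>e'\<in>G. 0 \<le> M e'"
    and sb: "\<forall>e'\<in>G. \<forall>n. norm (e' (s n)) \<le> M e'"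
    and sc: "\<forall>e'\<in>G. \<forall>m n. norm (e' (s m - s n)) \<le> M e' * (\<delta> m + \<delta> n)"
    and d0: "\<forall>n. 0 \<le> \<delta> n" and dl: "\<delta> \<longlonglongrightarrow> 0"
  shows "\<exists>x. \<forall>e'\<in>G. (\<lambda>n. e' (s n)) \<longlonglongrightarrow> e' x"
proof -
  define D where "D = {d. \<forall>e'\<in>G. norm (e' d) \<le> M e'}"
  define T where "T y = {t::real. 0 < t \<and> (\<exists>d\<in>D. y = complex_of_real t *\<^sub>C d)}" for y
  have gdef: "gauge_of D y = Inf (T y)" for y unfolding gauge_of_def T_def by simp
  have T_mem: "t \<in> T y" if yK: "\<forall>e'\<in>G. norm (e' y) \<le> M e' * K" and K: "0 \<le> K" "K < t" for y K t
  proof -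
    have t0: "0 < t" using K by simp
    define d where "d = inverse (complex_of_real t) *\<^sub>C y"
    have "d \<in> D" unfolding D_def
    proof (intro CollectI ballI)
      fix e' assume e': "e' \<in> G"
      then have "e' \<in> lc_dual p" using sub by auto
      then have "norm (e' d) = norm (e' y) / t" using t0
        by (simp add: d_def lf_scale norm_mult norm_inverse divide_inverse mult.commute)
      also have "\<dots> \<le> M e' * K / t" using yK e' t0 by (simp add: divide_right_mono)
      also have "\<dots> \<le> M e'"
      proof -
        have "M e' * K \<le> M e' * t" using M0 e' K by (intro mult_left_mono) auto
        then show ?thesis using t0 by (simp add: divide_le_eq)
      qed
      finally show "norm (e' d) \<le> M e'" .
    qed
    moreover have "y = complex_of_real t *\<^sub>C d" using t0 by (simp add: d_def scaleC_inv_cancel)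
    ultimately show ?thesis using t0 unfolding T_def by blast
  qed
  have T_bdd: "bdd_below (T y)" for y unfolding T_def bdd_below_def by (rule exI[of _ 0]) auto
  have gauge_le: "gauge_of D y \<le> K" if yK: "\<forall>e'\<in>G. norm (e' y) \<le> M e' * K" and K: "0 \<le> K" for y K
  proof (rule field_le_epsilon)
    fix \<epsilon>::real assume "0 < \<epsilon>"
    then have "K + \<epsilon> \<in> T y" using T_mem[OF yK K] by simp
    then show "gauge_of D y \<le> K + \<epsilon>" unfolding gdef using T_bdd by (rule cInf_lower)
  qed
  have gauge_ge: "norm (e' y) \<le> M e' * gauge_of D y" if e': "e' \<in> G" and ne: "T y \<noteq> {}" for e' y
  proof -
    have ld: "e' \<in> lc_dual p" using e' sub by auto
    have bound: "norm (e' y) \<le> M e' * t" if "t \<in> T y" for t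
    proof -
      from that obtain d where t0: "0 < t" and d: "d \<in> D" and y: "y = complex_of_real t *\<^sub>C d"
        unfolding T_def by blast
      have "norm (e' y) = t * norm (e' d)" using t0 by (simp add: y lf_scale[OF ld] norm_mult)
      also have "\<dots> \<le> t * M e'" using d e' t0 unfolding D_def by (simp add: mult_left_mono)
      finally show ?thesis by (simp add: mult.commute)
    qed
    show ?thesis
    proof (cases "M e' = 0")
      case True
      from ne obtain t where "t \<in> T y" by blast
      from bound[OF this] True show ?thesis by simp
    next
      case False
      then have Mp: "0 < M e'" using M0 e' by (simp add: order_less_le)
      have "norm (e' y) / M e' \<le> Inf (T y)"
        by (rule cInf_greatest[OF ne]) (use bound Mp in \<open>simp add: field_simps mult.commute\<close>)
      then show ?thesis using Mp unfolding gdef by (simp add: field_simps mult.commute)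
    qed
  qed
  have closedD: "lc_closed p D" unfolding lc_closed_def
  proof (intro allI impI)
    fix x assume cl: "\<forall>a. \<forall>\<epsilon>>0. \<exists>d\<in>D. p a (x - d) < \<epsilon>"
    show "x \<in> D" unfolding D_def
    proof (intro CollectI ballI)
      fix e' assume e': "e' \<in> G"
      then have ld: "e' \<in> lc_dual p" using sub by auto
      obtain a C where aC: "\<forall>x. norm (e' x) \<le> C * p a x" using lf_bound[OF ld] by blast
      show "norm (e' x) \<le> M e'"
      proof (rule field_le_epsilon)
        fix \<epsilon>::real assume ep: "0 < \<epsilon>"
        obtain d where d: "d \<in> D" and pd: "p a (x - d) < \<epsilon> / (\<bar>C\<bar> + 1)"
          using cl ep by (meson divide_pos_pos abs_ge_zero add_nonneg_pos zero_less_one)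
        have "e' x = e' (x - d) + e' d" using lf_add[OF ld, of "x - d" d] by simp
        then have "norm (e' x) \<le> norm (e' (x - d)) + norm (e' d)" by (metis norm_triangle_ineq)
        also have "norm (e' (x - d)) \<le> C * p a (x - d)" using aC by blast
        also have "C * p a (x - d) \<le> (\<bar>C\<bar> + 1) * p a (x - d)"
          using sn_nonneg[OF lc] by (simp add: mult_right_mono)
        also have "(\<bar>C\<bar> + 1) * p a (x - d) \<le> \<epsilon>"
          using pd by (simp add: field_simps)
        also have "norm (e' d) \<le> M e'" using d e' unfolding D_def by blast
        finally show "norm (e' x) \<le> M e' + \<epsilon>" by simp
      qed
    qed
  qed
  have boundedD: "lc_bounded p D"
  proof -
    have "\<forall>g\<in>G. bounded (g ` D)"
      unfolding D_def bounded_iff by blast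
    then show ?thesis using det unfolding determines_boundedness_def by blast
  qed
  have absD: "abs_convex D" unfolding abs_convex_def
  proof (intro ballI allI impI)
    fix x y and a b :: complex assume x: "x \<in> D" and y: "y \<in> D" and ab: "norm a + norm b \<le> (1::real)"
    show "a *\<^sub>C x + b *\<^sub>C y \<in> D" unfolding D_def
    proof (intro CollectI ballI)
      fix e' assume e': "e' \<in> G"
      then have ld: "e' \<in> lc_dual p" using sub by auto
      have "norm (e' (a *\<^sub>C x + b *\<^sub>C y)) = norm (a * e' x + b * e' y)"
        by (simp add: lf_add[OF ld] lf_scale[OF ld])
      also have "\<dots> \<le> norm a * norm (e' x) + norm b * norm (e' y)"
        by (metis norm_mult norm_triangle_ineq)
      also have "\<dots> \<le> norm a * M e' + norm b * M e'"
        using x y e' unfolding D_def by (intro add_mono mult_left_mono) auto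
      also have "\<dots> = (norm a + norm b) * M e'" by (simp add: algebra_simps)
      also have "\<dots> \<le> M e'" using ab M0 e' by (simp add: mult_left_le_one_le)
      finally show "norm (e' (a *\<^sub>C x + b *\<^sub>C y)) \<le> M e'" .
    qed
  qed
  have ban: "disc_banach D" using loc closedD boundedD absD unfolding locally_complete_def by blast
  have sD: "s n \<in> disc_span D" for n
  proof -
    have "s n \<in> D" using sb unfolding D_def by blast
    moreover have "s n = of_nat 1 *\<^sub>C s n" by (simp add: scaleC_one)
    ultimately show ?thesis unfolding disc_span_def by blast
  qed
  have cauchy: "\<forall>\<epsilon>>0. \<exists>N. \<forall>m\<ge>N. \<forall>n\<ge>N. gauge_of D (s m - s n) < \<epsilon>"
  proof (intro allI impI)
    fix \<epsilon>::real assume ep: "0 < \<epsilon>"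
    then obtain N where N: "\<forall>n\<ge>N. \<delta> n < \<epsilon> / 2"
    proof -
      have "eventually (\<lambda>n. \<delta> n < \<epsilon> / 2) sequentially"
        by (rule order_tendstoD(2)[OF dl]) (use ep in simp)
      then show ?thesis using that unfolding eventually_sequentially by blast
    qed
    show "\<exists>N. \<forall>m\<ge>N. \<forall>n\<ge>N. gauge_of D (s m - s n) < \<epsilon>"
    proof (intro exI allI impI)
      fix m n assume "N \<le> m" "N \<le> n"
      have "gauge_of D (s m - s n) \<le> \<delta> m + \<delta> n"
        using sc d0 by (intro gauge_le) (auto simp: add_nonneg_nonneg)
      also have "\<dots> < \<epsilon>"
      proof -
        have "\<delta> m < \<epsilon> / 2" "\<delta> n < \<epsilon> / 2" using N \<open>N \<le> m\<close> \<open>N \<le> n\<close> by auto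
        then show ?thesis by linarith
      qed
      finally show "gauge_of D (s m - s n) < \<epsilon>" .
    qed
  qed
  obtain x where xD: "x \<in> disc_span D" and xl: "(\<lambda>n. gauge_of D (s n - x)) \<longlonglongrightarrow> 0"
    using ban sD cauchy unfolding disc_banach_def by blast
  from xD obtain N d0' where d0': "d0' \<in> D" and xN: "x = of_nat N *\<^sub>C d0'"
    unfolding disc_span_def by blast
  show ?thesis
  proof (intro exI ballI)
    fix e' assume e': "e' \<in> G"
    then have ld: "e' \<in> lc_dual p" using sub by auto
    have bnd: "\<forall>e'\<in>G. norm (e' (s n - x)) \<le> M e' * (1 + real N)" for n
    proof
      fix e'' assume e'': "e'' \<in> G"
      then have ld'': "e'' \<in> lc_dual p" using sub by auto
      have "norm (e'' (s n - x)) \<le> norm (e'' (s n)) + norm (e'' x)"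
        by (simp add: lf_diff[OF ld''] norm_triangle_ineq4)
      moreover have "norm (e'' x) = real N * norm (e'' d0')"
        by (simp add: xN lf_scale[OF ld''] norm_mult)
      moreover have "real N * norm (e'' d0') \<le> real N * M e''" using d0' e'' unfolding D_def by (simp add: mult_left_mono)
      ultimately have "norm (e'' (s n - x)) \<le> norm (e'' (s n)) + real N * M e''" by linarith
      then have A: "norm (e'' (s n - x)) \<le> norm (e'' (s n)) + real N * M e''" .
      have "norm (e'' (s n)) \<le> M e''" using sb e'' by blast
      with A show "norm (e'' (s n - x)) \<le> M e'' * (1 + real N)" by (simp add: algebra_simps)
    qed
    have ne: "T (s n - x) \<noteq> {}" for n
      using T_mem[OF bnd[of n], of "2 + real N"] by auto
    have "(\<lambda>n. e' (s n) - e' x) \<longlonglongrightarrow> 0"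
    proof (rule Lim_null_comparison)
      show "\<forall>\<^sub>F n in sequentially. norm (e' (s n) - e' x) \<le> M e' * gauge_of D (s n - x)"
        using gauge_ge[OF e' ne] by (simp add: lf_diff[OF ld])
      show "(\<lambda>n. M e' * gauge_of D (s n - x)) \<longlonglongrightarrow> 0"
        using tendsto_mult_right_zero[OF xl] by simp
    qed
    then show "(\<lambda>n. e' (s n)) \<longlonglongrightarrow> e' x" by (simp add: LIM_zero_iff)
  qed
qed




definition Pn :: "(nat \<Rightarrow> complex) \<Rightarrow> nat \<Rightarrow> complex \<Rightarrow> complex" where
  "Pn u k v = (\<Prod>j<k. v - u j)"

fun alpha :: "(nat \<Rightarrow> complex) \<Rightarrow> nat \<Rightarrow> nat \<Rightarrow> complex" where
  "alpha u 0 j = (if j = 0 then 1 else 0)"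
| "alpha u (Suc k) j = (if j \<le> k then alpha u k j / (u j - u (Suc k))
      else if j = Suc k then - (\<Sum>i\<le>k. alpha u k i / (u i - u (Suc k))) else 0)"

lemma pf_aux2: "b \<noteq> 0 \<Longrightarrow> c \<noteq> 0 \<Longrightarrow> c - b \<noteq> 0 \<Longrightarrow> (\<alpha>::complex)/b/c = \<alpha>/(c-b)/b - \<alpha>/(c-b)/c"
  by (simp add: divide_simps) algebra
lemma tb: "(\<zeta>::complex) \<noteq> u \<Longrightarrow> \<zeta> \<noteq> z \<Longrightarrow> 1/(\<zeta> - z) = 1/(\<zeta> - u) + (z - u) / ((\<zeta> - u) * (\<zeta> - z))"
  by (simp add: divide_simps)
lemma ts: "B \<noteq> 0 \<Longrightarrow> b \<noteq> 0 \<Longrightarrow> (c::complex) \<noteq> 0 \<Longrightarrow> b = c + a \<Longrightarrow> A / (B * c) = A / (B * b) + A * a / (B * b * c)"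
  by (simp add: divide_simps) (simp add: algebra_simps)

lemma Pn_Suc: "Pn u (Suc k) v = Pn u k v * (v - u k)"
  by (simp add: Pn_def)

lemma Pn_nz: "(\<forall>j<k. v \<noteq> u j) \<Longrightarrow> Pn u k v \<noteq> 0"
  by (simp add: Pn_def)

lemma partial_frac:
  assumes "inj u" "\<forall>j\<le>k. \<zeta> \<noteq> u j"
  shows "1 / Pn u (Suc k) \<zeta> = (\<Sum>j\<le>k. alpha u k j / (\<zeta> - u j))"
  using assms(2)
proof (induction k)
  case 0 then show ?case by (simp add: Pn_def)
next
  case (Suc k)
  let ?u' = "u (Suc k)"
  have nz: "\<zeta> - ?u' \<noteq> 0" using Suc.prems by auto
  have IH: "1 / Pn u (Suc k) \<zeta> = (\<Sum>j\<le>k. alpha u k j / (\<zeta> - u j))"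
    using Suc by auto
  have "1 / Pn u (Suc (Suc k)) \<zeta> = (1 / Pn u (Suc k) \<zeta>) / (\<zeta> - ?u')"
    by (simp add: Pn_Suc[of u "Suc k"])
  also have "\<dots> = (\<Sum>j\<le>k. alpha u k j / (\<zeta> - u j) / (\<zeta> - ?u'))"
    by (simp add: IH sum_divide_distrib)
  also have "\<dots> = (\<Sum>j\<le>k. alpha u k j / (u j - ?u') / (\<zeta> - u j)
                   - alpha u k j / (u j - ?u') / (\<zeta> - ?u'))"
  proof (rule sum.cong[OF refl])
    fix j assume j: "j \<in> {..k}"
    have a: "u j - ?u' \<noteq> 0" using assms(1) j by (auto dest: injD)
    have b: "\<zeta> - u j \<noteq> 0" using Suc.prems j by auto
    show "alpha u k j / (\<zeta> - u j) / (\<zeta> - ?u') =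
          alpha u k j / (u j - ?u') / (\<zeta> - u j) - alpha u k j / (u j - ?u') / (\<zeta> - ?u')"
      using pf_aux2[of "\<zeta> - u j" "\<zeta> - ?u'" "alpha u k j"] a b nz by simp
  qed
  also have "\<dots> = (\<Sum>j\<le>k. alpha u k j / (u j - ?u') / (\<zeta> - u j))
                   - (\<Sum>j\<le>k. alpha u k j / (u j - ?u')) / (\<zeta> - ?u')"
    by (simp only: sum_subtractf sum_divide_distrib)
  also have "\<dots> = (\<Sum>j\<le>k. alpha u (Suc k) j / (\<zeta> - u j))
                   + alpha u (Suc k) (Suc k) / (\<zeta> - ?u')"
    by simp
  also have "\<dots> = (\<Sum>j\<le>Suc k. alpha u (Suc k) j / (\<zeta> - u j))"
    by simp
  finally show ?case .
qed

lemma telescope: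
  assumes "\<zeta> \<noteq> z" "\<forall>j\<le>n. \<zeta> \<noteq> u j"
  shows "1 / (\<zeta> - z) = (\<Sum>k\<le>n. Pn u k z / Pn u (Suc k) \<zeta>)
           + Pn u (Suc n) z / (Pn u (Suc n) \<zeta> * (\<zeta> - z))"
  using assms(2)
proof (induction n)
  case 0
  have "\<zeta> - u 0 \<noteq> 0" "\<zeta> - z \<noteq> 0" using 0 assms(1) by auto
  then show ?case using tb[of \<zeta> "u 0" z] by (simp add: Pn_def)
next
  case (Suc n)
  have IH: "1 / (\<zeta> - z) = (\<Sum>k\<le>n. Pn u k z / Pn u (Suc k) \<zeta>)
           + Pn u (Suc n) z / (Pn u (Suc n) \<zeta> * (\<zeta> - z))" using Suc by auto
  have B: "Pn u (Suc n) \<zeta> \<noteq> 0" using Suc.prems by (intro Pn_nz) auto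
  have b: "\<zeta> - u (Suc n) \<noteq> 0" using Suc.prems by auto
  have c: "\<zeta> - z \<noteq> 0" using assms(1) by auto
  have "Pn u (Suc n) z / (Pn u (Suc n) \<zeta> * (\<zeta> - z)) =
        Pn u (Suc n) z / Pn u (Suc (Suc n)) \<zeta> + Pn u (Suc (Suc n)) z / (Pn u (Suc (Suc n)) \<zeta> * (\<zeta> - z))"
    using ts[OF B b c, of "z - u (Suc n)" "Pn u (Suc n) z"] by (simp add: Pn_Suc[of u "Suc n"] mult.assoc)
  then show ?case using IH by simp
qed

lemma norm_Pn_ratio:
  assumes "\<forall>j<k. norm (z - u j) \<le> q * norm (\<zeta> - u j)" "\<forall>j<k. \<zeta> \<noteq> u j" "0 \<le> q"
  shows "norm (Pn u k z / Pn u k \<zeta>) \<le> q ^ k"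
proof -
  have "norm (Pn u k z / Pn u k \<zeta>) = (\<Prod>j<k. norm (z - u j) / norm (\<zeta> - u j))"
    by (simp add: Pn_def prod_dividef[symmetric] prod_norm[symmetric] norm_divide)
  also have "\<dots> \<le> (\<Prod>j<k. q)"
  proof (rule prod_mono)
    fix j assume "j \<in> {..<k}"
    then show "0 \<le> norm (z - u j) / norm (\<zeta> - u j) \<and> norm (z - u j) / norm (\<zeta> - u j) \<le> q"
      using assms by (auto simp: divide_le_eq)
  qed
  finally show ?thesis by simp
qed




lemma newton_local:
  fixes p :: "'i \<Rightarrow> 'e::cvec \<Rightarrow> real" and h :: "('e \<Rightarrow> complex) \<Rightarrow> complex \<Rightarrow> complex"
  assumes lc: "lcHs p" and loc: "locally_complete p" and sub: "G \<subseteq> lc_dual p"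
    and det: "determines_boundedness p G"
    and hol: "\<forall>e'\<in>G. h e' holomorphic_on ball 0 1"
    and w: "w \<in> ball 0 1"
    and lim: "w islimpt {z \<in> ball 0 1. \<exists>x. \<forall>e'\<in>G. e' x = h e' z}"
  shows "\<exists>\<rho>>0. \<forall>z\<in>ball w \<rho>. \<exists>x. \<forall>e'\<in>G. e' x = h e' z"
proof -
  define R where "R = (1 - norm w) / 2"
  define \<rho> where "\<rho> = R / 5"
  have R0: "0 < R" using w by (simp add: R_def)
  have \<rho>0: "0 < \<rho>" using R0 by (simp add: \<rho>_def)
  have cb: "cball w R \<subseteq> ball 0 1"
  proof
    fix \<zeta> assume "\<zeta> \<in> cball w R"
    then have "norm (\<zeta> - w) \<le> R" by (simp add: dist_norm norm_minus_commute)
    then have "norm \<zeta> \<le> norm w + R" using norm_triangle_sub[of \<zeta> w] by linarith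
    then show "\<zeta> \<in> ball 0 1" using w by (simp add: R_def field_simps)
  qed
  define S where "S = {z \<in> ball 0 1. \<exists>x. \<forall>e'\<in>G. e' x = h e' z}"
  have "infinite (S \<inter> ball w \<rho>)" using lim \<rho>0 unfolding S_def islimpt_eq_infinite_ball by blast
  then obtain u :: "nat \<Rightarrow> complex" where inj: "inj u" and ur: "range u \<subseteq> S \<inter> ball w \<rho>"
    using infinite_countable_subset by blast
  have "\<forall>j. \<exists>x. \<forall>e'\<in>G. e' x = h e' (u j)" using ur unfolding S_def by blast
  from choice[OF this] obtain \<phi> where \<phi>: "\<forall>j. \<forall>e'\<in>G. e' (\<phi> j) = h e' (u j)" by blast
  have uw: "norm (u j - w) < \<rho>" for j
  proof -
    have "u j \<in> ball w \<rho>" using ur by blast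
    then show ?thesis by (simp add: dist_norm norm_minus_commute)
  qed
  have "\<forall>e'\<in>G. \<exists>B\<ge>0. \<forall>\<zeta>\<in>sphere w R. norm (h e' \<zeta>) \<le> B"
  proof
    fix e' assume e': "e' \<in> G"
    have "sphere w R \<subseteq> ball 0 1" using cb sphere_cball by blast
    then have "continuous_on (sphere w R) (h e')"
      using hol e' holomorphic_on_imp_continuous_on holomorphic_on_subset by blast
    then have "compact (h e' ` sphere w R)" by (rule compact_continuous_image[OF _ compact_sphere])
    then have "bounded (h e' ` sphere w R)" by (rule compact_imp_bounded)
    then obtain B where "\<forall>y\<in>h e' ` sphere w R. norm y \<le> B"
      unfolding bounded_iff by (elim exE) (rule that)
    then show "\<exists>B\<ge>0. \<forall>\<zeta>\<in>sphere w R. norm (h e' \<zeta>) \<le> B"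
      by (intro exI[of _ "max B 0"]) auto
  qed
  from bchoice[OF this] obtain Mh where Mh0: "\<forall>e'\<in>G. 0 \<le> Mh e'" and Mh: "\<forall>e'\<in>G. \<forall>\<zeta>\<in>sphere w R. norm (h e' \<zeta>) \<le> Mh e'"
    by blast
  show ?thesis
  proof (intro exI[of _ \<rho>] conjI \<rho>0 ballI)
    fix z assume z: "z \<in> ball w \<rho>"
    then have zw: "norm (z - w) < \<rho>" by (simp add: dist_norm norm_minus_commute)
    define c where "c e' k = (\<Sum>j\<le>k. alpha u k j * h e' (u j))" for e' k
    define y where "y k = (\<Sum>j\<le>k. alpha u k j *\<^sub>C \<phi> j)" for k
    define s where "s n = (\<Sum>k\<le>n. Pn u k z *\<^sub>C y k)" for n
    have es: "e' (s n) = (\<Sum>k\<le>n. Pn u k z * c e' k)" if e': "e' \<in> G" for e' n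
    proof -
      have ld: "e' \<in> lc_dual p" using e' sub by auto
      show ?thesis unfolding s_def lf_sum[OF ld] y_def c_def using \<phi> e' by simp
    qed
    have key: "norm (h e' z - (\<Sum>k\<le>n. Pn u k z * c e' k)) \<le> Mh e' * (5/4) * (1/2) ^ Suc n"
      if e': "e' \<in> G" for e' n
    proof -
      let ?\<gamma> = "circlepath w R"
      let ?h = "h e'"
      have holc: "?h holomorphic_on cball w R" using hol e' cb holomorphic_on_subset by blast
      have cj: "((\<lambda>\<zeta>. ?h \<zeta> / (\<zeta> - u j)) has_contour_integral (2 * of_real pi * \<i> * ?h (u j))) ?\<gamma>" for j
        using uw[of j] \<rho>_def R0 by (intro Cauchy_integral_circlepath_simple holc) auto
      have cz: "((\<lambda>\<zeta>. ?h \<zeta> / (\<zeta> - z)) has_contour_integral (2 * of_real pi * \<i> * ?h z)) ?\<gamma>"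
        using zw \<rho>_def R0 by (intro Cauchy_integral_circlepath_simple holc) auto
      have ck: "((\<lambda>\<zeta>. \<Sum>j\<le>k. alpha u k j * (?h \<zeta> / (\<zeta> - u j))) has_contour_integral
                 (\<Sum>j\<le>k. alpha u k j * (2 * of_real pi * \<i> * ?h (u j)))) ?\<gamma>" for k
        by (intro has_contour_integral_sum has_contour_integral_lmul cj) auto
      have all: "((\<lambda>\<zeta>. ?h \<zeta> / (\<zeta> - z) - (\<Sum>k\<le>n. Pn u k z * (\<Sum>j\<le>k. alpha u k j * (?h \<zeta> / (\<zeta> - u j)))))
          has_contour_integral (2 * of_real pi * \<i> * ?h z -
             (\<Sum>k\<le>n. Pn u k z * (\<Sum>j\<le>k. alpha u k j * (2 * of_real pi * \<i> * ?h (u j)))))) ?\<gamma>"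
        by (intro has_contour_integral_diff cz has_contour_integral_sum has_contour_integral_lmul ck) auto
      have val: "2 * of_real pi * \<i> * ?h z -
             (\<Sum>k\<le>n. Pn u k z * (\<Sum>j\<le>k. alpha u k j * (2 * of_real pi * \<i> * ?h (u j))))
           = (2 * of_real pi * \<i>) * (?h z - (\<Sum>k\<le>n. Pn u k z * c e' k))"
        by (simp add: c_def right_diff_distrib sum_distrib_left mult_ac)
      define B where "B = Mh e' * (1/2) ^ Suc n / (4 * \<rho>)"
      have B0: "0 \<le> B" using Mh0 e' \<rho>0 by (simp add: B_def)
      have pt: "norm (?h \<zeta> / (\<zeta> - z) - (\<Sum>k\<le>n. Pn u k z * (\<Sum>j\<le>k. alpha u k j * (?h \<zeta> / (\<zeta> - u j))))) \<le> B"
        if \<zeta>: "norm (\<zeta> - w) = R" for \<zeta>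
      proof -
        have far: "4 * \<rho> \<le> norm (\<zeta> - v)" if "norm (v - w) < \<rho>" for v
        proof -
          have "norm (\<zeta> - w) \<le> norm (\<zeta> - v) + norm (v - w)" using norm_triangle_ineq[of "\<zeta> - v" "v - w"] by simp
          then show ?thesis using that \<zeta> \<rho>_def by simp
        qed
        have nu: "\<forall>j. \<zeta> \<noteq> u j"
        proof (intro allI notI)
          fix j assume "\<zeta> = u j"
          then show False using far[OF uw[of j]] \<rho>0 by simp
        qed
        have nz: "\<zeta> \<noteq> z" using far[OF zw] \<rho>0 by auto
        have inner: "(\<Sum>j\<le>k. alpha u k j * (?h \<zeta> / (\<zeta> - u j))) = ?h \<zeta> * (1 / Pn u (Suc k) \<zeta>)" for k
          using partial_frac[OF inj, of k \<zeta>] nu by (simp add: sum_distrib_left mult_ac)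
        have "?h \<zeta> / (\<zeta> - z) - (\<Sum>k\<le>n. Pn u k z * (\<Sum>j\<le>k. alpha u k j * (?h \<zeta> / (\<zeta> - u j))))
              = ?h \<zeta> / (\<zeta> - z) - (\<Sum>k\<le>n. Pn u k z * (?h \<zeta> * (1 / Pn u (Suc k) \<zeta>)))"
          by (simp only: inner)
        also have "\<dots> = ?h \<zeta> * (1 / (\<zeta> - z) - (\<Sum>k\<le>n. Pn u k z / Pn u (Suc k) \<zeta>))"
          by (simp add: sum_distrib_left right_diff_distrib mult_ac)
        also have "\<dots> = ?h \<zeta> * (Pn u (Suc n) z / Pn u (Suc n) \<zeta>) / (\<zeta> - z)"
          using telescope[OF nz, of n u] nu by simp
        finally have eq: "?h \<zeta> / (\<zeta> - z) - (\<Sum>k\<le>n. Pn u k z * (\<Sum>j\<le>k. alpha u k j * (?h \<zeta> / (\<zeta> - u j))))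
              = ?h \<zeta> * (Pn u (Suc n) z / Pn u (Suc n) \<zeta>) / (\<zeta> - z)" .
        have r: "norm (Pn u (Suc n) z / Pn u (Suc n) \<zeta>) \<le> (1/2) ^ Suc n"
        proof (rule norm_Pn_ratio)
          show "\<forall>j<Suc n. norm (z - u j) \<le> 1 / 2 * norm (\<zeta> - u j)"
          proof (intro allI impI)
            fix j
            have "norm (z - u j) \<le> norm (z - w) + norm (u j - w)"
              using norm_triangle_ineq4[of "z - w" "u j - w"] by simp
            also have "\<dots> \<le> 2 * \<rho>" using zw uw[of j] by simp
            also have "\<dots> \<le> 1/2 * norm (\<zeta> - u j)" using far[OF uw[of j]] by simp
            finally show "norm (z - u j) \<le> 1 / 2 * norm (\<zeta> - u j)" .
          qed
        qed (use nu in auto)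
        have hz: "norm (?h \<zeta>) \<le> Mh e'" using Mh e' \<zeta> by (simp add: dist_norm norm_minus_commute)
        have dz: "4 * \<rho> \<le> norm (\<zeta> - z)" using far[OF zw] .
        have "norm (?h \<zeta> * (Pn u (Suc n) z / Pn u (Suc n) \<zeta>) / (\<zeta> - z))
             = norm (?h \<zeta>) * norm (Pn u (Suc n) z / Pn u (Suc n) \<zeta>) / norm (\<zeta> - z)"
          by (simp add: norm_mult norm_divide)
        also have "\<dots> \<le> Mh e' * (1/2) ^ Suc n / (4 * \<rho>)"
          using hz r dz \<rho>0 Mh0 e'
          by (intro frac_le mult_mono) auto
        finally show ?thesis using eq by (simp add: B_def)
      qed
      have "norm ((2 * of_real pi * \<i>) * (?h z - (\<Sum>k\<le>n. Pn u k z * c e' k))) \<le> B * (2 * pi * R)"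
        using has_contour_integral_bound_circlepath[OF all B0 R0] pt val by simp
      then have "2 * pi * norm (?h z - (\<Sum>k\<le>n. Pn u k z * c e' k)) \<le> B * (2 * pi * R)"
        by (simp add: norm_mult)
      then have "norm (?h z - (\<Sum>k\<le>n. Pn u k z * c e' k)) \<le> B * R"
        by (simp add: mult.commute mult.left_commute)
      also have "B * R = Mh e' * (5/4) * (1/2) ^ Suc n" using \<rho>0 by (simp add: B_def \<rho>_def field_simps)
      finally show ?thesis .
    qed
    define M where "M e' = norm (h e' z) + 2 * Mh e'" for e'
    define \<delta> where "\<delta> n = (5/4) * (1/2::real) ^ Suc n" for n
    have dl: "\<delta> \<longlonglongrightarrow> 0" unfolding \<delta>_def
      by (intro tendsto_mult_right_zero LIMSEQ_power_zero[THEN LIMSEQ_Suc]) auto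
    have d0: "\<forall>n. 0 \<le> \<delta> n" by (simp add: \<delta>_def)
    have M0: "\<forall>e'\<in>G. 0 \<le> M e'" using Mh0 by (simp add: M_def)
    have sb: "\<forall>e'\<in>G. \<forall>n. norm (e' (s n)) \<le> M e'"
    proof (intro ballI allI)
      fix e' n assume e': "e' \<in> G"
      have "norm (e' (s n)) \<le> norm (h e' z) + norm (h e' z - e' (s n))"
        using norm_triangle_ineq4[of "h e' z" "h e' z - e' (s n)"] by simp
      also have "norm (h e' z - e' (s n)) \<le> Mh e' * (5/4) * (1/2) ^ Suc n"
        using key[OF e', of n] es[OF e'] by simp
      also have "\<dots> \<le> Mh e' * 2"
      proof -
        have "(1/2::real) ^ Suc n \<le> 1" by (rule power_le_one) auto
        then have c52: "(5/4::real) * (1/2) ^ Suc n \<le> 2" by simp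
        show ?thesis using mult_left_mono[OF c52, of "Mh e'"] Mh0 e' by (simp add: mult.assoc)
      qed
      finally show "norm (e' (s n)) \<le> M e'" by (simp add: M_def)
    qed
    have sc: "\<forall>e'\<in>G. \<forall>m n. norm (e' (s m - s n)) \<le> M e' * (\<delta> m + \<delta> n)"
    proof (intro ballI allI)
      fix e' m n assume e': "e' \<in> G"
      have ld: "e' \<in> lc_dual p" using e' sub by auto
      have "e' (s m - s n) = (h e' z - e' (s n)) - (h e' z - e' (s m))" by (simp add: lf_diff[OF ld])
      then have "norm (e' (s m - s n)) \<le> norm (h e' z - e' (s n)) + norm (h e' z - e' (s m))"
        using norm_triangle_ineq4[of "h e' z - e' (s n)" "h e' z - e' (s m)"] by simp
      also have "\<dots> \<le> Mh e' * \<delta> n + Mh e' * \<delta> m"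
        using key[OF e', of n] key[OF e', of m] es[OF e'] by (simp add: \<delta>_def mult_ac)
      also have "\<dots> \<le> M e' * (\<delta> m + \<delta> n)"
      proof -
        have "Mh e' \<le> M e'" using Mh0 e' by (simp add: M_def)
        then show ?thesis using d0 by (simp add: algebra_simps add_mono mult_right_mono)
      qed
      finally show "norm (e' (s m - s n)) \<le> M e' * (\<delta> m + \<delta> n)" .
    qed
    obtain x where x: "\<forall>e'\<in>G. (\<lambda>n. e' (s n)) \<longlonglongrightarrow> e' x"
      using complete_lemma[OF lc loc sub det M0 sb sc d0 dl] by blast
    show "\<exists>x. \<forall>e'\<in>G. e' x = h e' z"
    proof (intro exI ballI)
      fix e' assume e': "e' \<in> G"
      have "(\<lambda>n. e' (s n)) \<longlonglongrightarrow> h e' z"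
      proof -
        have "(\<lambda>n. h e' z - e' (s n)) \<longlonglongrightarrow> 0"
        proof (rule Lim_null_comparison)
          show "\<forall>\<^sub>F n in sequentially. norm (h e' z - e' (s n)) \<le> Mh e' * \<delta> n"
            using key[OF e'] es[OF e'] by (simp add: \<delta>_def mult_ac)
          show "(\<lambda>n. Mh e' * \<delta> n) \<longlonglongrightarrow> 0" using tendsto_mult_right_zero[OF dl] by simp
        qed
        then have "(\<lambda>n. h e' z - (h e' z - e' (s n))) \<longlonglongrightarrow> h e' z - 0"
          by (intro tendsto_diff tendsto_const)
        then show ?thesis by simp
      qed
      then show "e' x = h e' z" using x e' LIMSEQ_unique by blast
    qed
  qed
qed




lemma approx_lemma:
  fixes p :: "'i \<Rightarrow> 'e::cvec \<Rightarrow> real" and s :: "nat \<Rightarrow> 'e"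
  assumes lc: "lcHs p" and loc: "locally_complete p" and sub: "G \<subseteq> lc_dual p"
    and det: "determines_boundedness p G"
    and K0: "\<forall>e'\<in>G. 0 \<le> K e'"
    and ap: "\<forall>e'\<in>G. \<forall>n. norm (v e' - e' (s n)) \<le> K e' * \<delta> n"
    and d0: "\<forall>n. 0 \<le> \<delta> n" and d1: "\<forall>n. \<delta> n \<le> 1" and dl: "\<delta> \<longlonglongrightarrow> 0"
  shows "\<exists>x. \<forall>e'\<in>G. e' x = v e'"
proof -
  define M where "M e' = norm (v e') + K e'" for e'
  have M0: "\<forall>e'\<in>G. 0 \<le> M e'" using K0 by (simp add: M_def)
  have sb: "\<forall>e'\<in>G. \<forall>n. norm (e' (s n)) \<le> M e'"
  proof (intro ballI allI)
    fix e' n assume e': "e' \<in> G"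
    have "norm (e' (s n)) \<le> norm (v e') + norm (v e' - e' (s n))"
      using norm_triangle_ineq4[of "v e'" "v e' - e' (s n)"] by simp
    moreover have "norm (v e' - e' (s n)) \<le> K e' * \<delta> n" using ap e' by blast
    moreover have "K e' * \<delta> n \<le> K e'" using K0 e' d1 d0 by (simp add: mult_left_le)
    ultimately show "norm (e' (s n)) \<le> M e'" by (simp add: M_def)
  qed
  have sc: "\<forall>e'\<in>G. \<forall>m n. norm (e' (s m - s n)) \<le> M e' * (\<delta> m + \<delta> n)"
  proof (intro ballI allI)
    fix e' m n assume e': "e' \<in> G"
    have ld: "e' \<in> lc_dual p" using e' sub by auto
    have "e' (s m - s n) = (v e' - e' (s n)) - (v e' - e' (s m))" by (simp add: lf_diff[OF ld])
    then have "norm (e' (s m - s n)) \<le> norm (v e' - e' (s n)) + norm (v e' - e' (s m))"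
      using norm_triangle_ineq4[of "v e' - e' (s n)" "v e' - e' (s m)"] by simp
    moreover have "norm (v e' - e' (s n)) \<le> K e' * \<delta> n" "norm (v e' - e' (s m)) \<le> K e' * \<delta> m"
      using ap e' by blast+
    moreover have "K e' * (\<delta> m + \<delta> n) \<le> M e' * (\<delta> m + \<delta> n)"
      using d0 by (intro mult_right_mono) (auto simp: M_def)
    ultimately show "norm (e' (s m - s n)) \<le> M e' * (\<delta> m + \<delta> n)"
      by (simp add: algebra_simps)
  qed
  obtain x where x: "\<forall>e'\<in>G. (\<lambda>n. e' (s n)) \<longlonglongrightarrow> e' x"
    using complete_lemma[OF lc loc sub det M0 sb sc d0 dl] by blast
  show ?thesis
  proof (intro exI ballI)
    fix e' assume e': "e' \<in> G"
    have "(\<lambda>n. v e' - e' (s n)) \<longlonglongrightarrow> 0"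
    proof (rule Lim_null_comparison)
      show "\<forall>\<^sub>F n in sequentially. norm (v e' - e' (s n)) \<le> K e' * \<delta> n"
        using ap e' by simp
      show "(\<lambda>n. K e' * \<delta> n) \<longlonglongrightarrow> 0" using tendsto_mult_right_zero[OF dl] by simp
    qed
    then have "(\<lambda>n. v e' - (v e' - e' (s n))) \<longlonglongrightarrow> v e' - 0"
      by (intro tendsto_diff tendsto_const)
    then have "(\<lambda>n. e' (s n)) \<longlonglongrightarrow> v e'" by simp
    then show "e' x = v e'" using x e' LIMSEQ_unique by blast
  qed
qed

lemma taylor2:
  assumes hol: "g holomorphic_on ball 0 1" and K: "K \<subseteq> ball 0 1" "compact K" "convex K"
  shows "\<exists>B\<ge>0. \<forall>a\<in>K. \<forall>b\<in>K. norm (g b - g a - deriv g a * (b - a)) \<le> B * norm (b - a) ^ 2"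
proof -
  have h1: "deriv g holomorphic_on ball 0 1" using hol by (rule holomorphic_deriv) simp
  have h2: "deriv (deriv g) holomorphic_on ball 0 1" using h1 by (rule holomorphic_deriv) simp
  have "continuous_on K (deriv (deriv g))"
    using h2 K(1) holomorphic_on_imp_continuous_on holomorphic_on_subset by blast
  then have "compact (deriv (deriv g) ` K)" using K(2) by (rule compact_continuous_image)
  then have "bounded (deriv (deriv g) ` K)" by (rule compact_imp_bounded)
  then obtain B where B: "\<forall>y\<in>deriv (deriv g) ` K. norm y \<le> B"
    unfolding bounded_iff by (elim exE) (rule that)
  define f where "f i = (if i = 0 then g else if i = 1 then deriv g else deriv (deriv g))" for i :: nat
  show ?thesis
  proof (intro exI[of _ "max B 0"] conjI ballI)
    fix a b assume a: "a \<in> K" and b: "b \<in> K"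
    have "cmod (f 0 b - (\<Sum>i\<le>1. f i a * (b - a) ^ i / fact i)) \<le> max B 0 * cmod (b - a) ^ Suc 1 / fact 1"
    proof (rule complex_Taylor[OF K(3)])
      fix i :: nat and x assume x: "x \<in> K" and i: "i \<le> 1"
      have xb: "x \<in> ball 0 1" using x K(1) by auto
      show "(f i has_field_derivative f (Suc i) x) (at x within K)"
      proof (cases "i = 0")
        case True then show ?thesis using holomorphic_derivI[OF hol open_ball xb] by (simp add: f_def)
      next
        case False then have "i = 1" using i by simp
        then show ?thesis using holomorphic_derivI[OF h1 open_ball xb] by (simp add: f_def)
      qed
    next
      fix x assume "x \<in> K"
      then show "cmod (f (Suc 1) x) \<le> max B 0" using B by (auto simp: f_def)
    qed (use a b in auto)
    then show "norm (g b - g a - deriv g a * (b - a)) \<le> max B 0 * norm (b - a) ^ 2"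
      by (simp add: f_def algebra_simps power2_eq_square)
  qed simp
qed




lemma riemann:
  fixes p :: "'i \<Rightarrow> 'e::cvec \<Rightarrow> real" and g :: "('e \<Rightarrow> complex) \<Rightarrow> complex \<Rightarrow> complex"
  assumes lc: "lcHs p" and loc: "locally_complete p" and sub: "G \<subseteq> lc_dual p"
    and det: "determines_boundedness p G"
    and hol: "\<forall>e'\<in>G. g e' holomorphic_on ball 0 1"
    and \<Phi>: "\<forall>z\<in>ball 0 1. \<forall>e'\<in>G. e' (\<Phi> z) = deriv (g e') z"
    and f0: "\<forall>e'\<in>G. e' f0 = g e' 0"
    and z: "z \<in> ball 0 1"
  shows "\<exists>x. \<forall>e'\<in>G. e' x = g e' z"
proof -
  define K where "K = cball (0::complex) (norm z)"
  have nz: "norm z < 1" using z by simp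
  have K: "K \<subseteq> ball 0 1" "compact K" "convex K" using nz by (auto simp: K_def)
  have "\<forall>e'\<in>G. \<exists>B\<ge>0. \<forall>a\<in>K. \<forall>b\<in>K. norm (g e' b - g e' a - deriv (g e') a * (b - a)) \<le> B * norm (b - a) ^ 2"
    using taylor2 hol K by blast
  from bchoice[OF this] obtain B where B0: "\<forall>e'\<in>G. 0 \<le> B e'"
    and B: "\<forall>e'\<in>G. \<forall>a\<in>K. \<forall>b\<in>K. norm (g e' b - g e' a - deriv (g e') a * (b - a)) \<le> B e' * norm (b - a) ^ 2"
    by blast
  define t where "t N j = of_nat j * z / of_nat N" for N j :: nat
  have tK: "t N j \<in> K" if "j \<le> N" "0 < N" for N j
  proof -
    have "norm (t N j) = real j / real N * norm z" by (simp add: t_def norm_mult norm_divide)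
    also have "\<dots> \<le> 1 * norm z" using that by (intro mult_right_mono) auto
    finally show ?thesis by (simp add: K_def)
  qed
  define s where "s n = f0 + (\<Sum>j<Suc n. (z / of_nat (Suc n)) *\<^sub>C \<Phi> (t (Suc n) j))" for n
  define \<delta> where "\<delta> n = inverse (real (Suc n))" for n
  have key: "\<forall>e'\<in>G. \<forall>n. norm (g e' z - e' (s n)) \<le> B e' * \<delta> n"
  proof (intro ballI allI)
    fix e' n assume e': "e' \<in> G"
    define N where "N = Suc n"
    have N0: "0 < N" by (simp add: N_def)
    have ld: "e' \<in> lc_dual p" using e' sub by auto
    have tb: "t N j \<in> ball 0 1" if "j \<le> N" for j using tK[OF that N0] K(1) by auto
    have es: "e' (s n) = g e' 0 + (\<Sum>j<N. (z / of_nat N) * deriv (g e') (t N j))"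
    proof -
      have "e' (s n) = e' f0 + (\<Sum>j<N. (z / of_nat N) * e' (\<Phi> (t N j)))"
        unfolding s_def N_def by (simp only: lf_add[OF ld] lf_sum[OF ld])
      also have "\<dots> = g e' 0 + (\<Sum>j<N. (z / of_nat N) * deriv (g e') (t N j))"
        using f0 e' \<Phi> tb by (intro arg_cong2[where f="(+)"] sum.cong) auto
      finally show ?thesis .
    qed
    have tel: "g e' z - g e' 0 = (\<Sum>j<N. g e' (t N (Suc j)) - g e' (t N j))"
      using sum_lessThan_telescope[of "\<lambda>j. g e' (t N j)" N] N0 by (simp add: t_def)
    have step: "t N (Suc j) - t N j = z / of_nat N" for j
      by (simp add: t_def diff_divide_distrib[symmetric] algebra_simps)
    have "g e' z - e' (s n) = (g e' z - g e' 0) - (\<Sum>j<N. (z / of_nat N) * deriv (g e') (t N j))"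
      using es by simp
    also have "\<dots> = (\<Sum>j<N. g e' (t N (Suc j)) - g e' (t N j) - deriv (g e') (t N j) * (t N (Suc j) - t N j))"
      by (simp add: tel step sum_subtractf mult.commute)
    finally have eq: "g e' z - e' (s n) = \<dots>" .
    have "norm (g e' z - e' (s n)) \<le> (\<Sum>j<N. norm (g e' (t N (Suc j)) - g e' (t N j) - deriv (g e') (t N j) * (t N (Suc j) - t N j)))"
      unfolding eq by (rule norm_sum)
    also have "\<dots> \<le> (\<Sum>j<N. B e' * norm (z / of_nat N) ^ 2)"
    proof (rule sum_mono)
      fix j assume "j \<in> {..<N}"
      then have "t N j \<in> K" "t N (Suc j) \<in> K" using tK N0 by auto
      then show "norm (g e' (t N (Suc j)) - g e' (t N j) - deriv (g e') (t N j) * (t N (Suc j) - t N j))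
                 \<le> B e' * norm (z / of_nat N) ^ 2"
        using B e' step[of j] by metis
    qed
    also have "\<dots> = B e' * norm z ^ 2 / real N"
      using N0 by (simp add: norm_divide power2_eq_square field_simps)
    also have "\<dots> \<le> B e' * 1 / real N"
    proof -
      have "norm z ^ 2 \<le> 1" using nz by (simp add: power_le_one)
      then show ?thesis using B0 e' N0 by (intro divide_right_mono mult_left_mono) auto
    qed
    also have "\<dots> = B e' * \<delta> n" by (simp add: \<delta>_def N_def divide_inverse)
    finally show "norm (g e' z - e' (s n)) \<le> B e' * \<delta> n" .
  qed
  show ?thesis
  proof (rule approx_lemma[OF lc loc sub det B0 key])
    show "\<forall>n. 0 \<le> \<delta> n" by (auto simp: \<delta>_def)
    show "\<forall>n. \<delta> n \<le> 1" by (simp add: \<delta>_def inverse_le_1_iff)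
    show "\<delta> \<longlonglongrightarrow> 0" unfolding \<delta>_def by (rule LIMSEQ_inverse_real_of_nat)
  qed
qed

lemma scaleC_neg_one: "(-1) *\<^sub>C (y::'e::cvec) = - y"
proof -
  have "(-1) *\<^sub>C y + y = ((-1) + 1) *\<^sub>C y" using scaleC_add_left[of "-1" 1 y] by (simp add: scaleC_one)
  also have "\<dots> = 0" by simp
  finally have "(-1) *\<^sub>C y + y = 0" .
  then show ?thesis by (simp add: eq_neg_iff_add_eq_0)
qed

lemma sn_minus: "lcHs p \<Longrightarrow> p a (- y) = p a y"
  using sn_scale[of p a "-1" y] by (simp add: scaleC_neg_one)

lemma sn_triangle: "lcHs p \<Longrightarrow> p a (x + y) \<le> p a x + p a y"
  by (simp add: lcHs_def)

lemma lc_deriv_unique: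
  assumes lc: "lcHs p" and d1: "lc_has_deriv p F d1 z" and d2: "lc_has_deriv p F d2 z"
  shows "d1 = d2"
proof -
  define q where "q h = inverse h *\<^sub>C (F (z + h) - F z)" for h
  have "\<forall>a. p a (d1 - d2) = 0"
  proof
    fix a
    have l1: "((\<lambda>h. p a (q h - d1)) \<longlongrightarrow> 0) (at 0)" using d1 unfolding lc_has_deriv_def q_def by blast
    have l2: "((\<lambda>h. p a (q h - d2)) \<longlongrightarrow> 0) (at 0)" using d2 unfolding lc_has_deriv_def q_def by blast
    have b: "p a (d1 - d2) \<le> p a (q h - d2) + p a (q h - d1)" for h
    proof -
      have "d1 - d2 = (q h - d2) + - (q h - d1)" by (simp add: algebra_simps)
      then have t: "p a (d1 - d2) \<le> p a (q h - d2) + p a (- (q h - d1))" using sn_triangle[OF lc] by metis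
      have m: "p a (- (q h - d1)) = p a (q h - d1)" by (rule sn_minus[OF lc])
      show ?thesis using t m by linarith
    qed
    have "p a (d1 - d2) \<le> 0 + 0"
      by (rule tendsto_le[OF at_neq_bot tendsto_add[OF l2 l1] tendsto_const]) (use b in auto)
    moreover have "0 \<le> p a (d1 - d2)" by (rule sn_nonneg[OF lc])
    ultimately show "p a (d1 - d2) = 0" by linarith
  qed
  then have "d1 - d2 = 0"
  proof (rule contrapos_pp)
    assume "d1 - d2 \<noteq> 0"
    then obtain a where "0 < p a (d1 - d2)" using lc unfolding lcHs_def by blast
    then have "p a (d1 - d2) \<noteq> 0" by simp
    then show "\<not> (\<forall>a. p a (d1 - d2) = 0)" by blast
  qed
  then show ?thesis by simp
qed

lemma lc_deriv_eq: "lcHs p \<Longrightarrow> lc_has_deriv p F d z \<Longrightarrow> lc_deriv p F z = d"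
  unfolding lc_deriv_def by (rule the_equality) (auto intro: lc_deriv_unique)

lemma weak_deriv:
  assumes lc: "lcHs p" and ld: "e' \<in> lc_dual p" and d: "lc_has_deriv p F d z"
  shows "((\<lambda>z. e' (F z)) has_field_derivative e' d) (at z)"
proof -
  obtain b C where bC: "\<forall>x. norm (e' x) \<le> C * p b x" using lf_bound[OF ld] by blast
  have eq: "(e' (F (z + h)) - e' (F z)) / h - e' d = e' (inverse h *\<^sub>C (F (z + h) - F z) - d)" for h
    by (simp add: lf_diff[OF ld] lf_scale[OF ld] divide_inverse mult.commute)
  have "((\<lambda>h. (e' (F (z + h)) - e' (F z)) / h - e' d) \<longlongrightarrow> 0) (at 0)"
  proof (rule Lim_null_comparison)
    show "\<forall>\<^sub>F h in at 0. norm ((e' (F (z + h)) - e' (F z)) / h - e' d) \<le> C * p b (inverse h *\<^sub>C (F (z + h) - F z) - d)"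
      unfolding eq using bC by simp
    have "((\<lambda>h. p b (inverse h *\<^sub>C (F (z + h) - F z) - d)) \<longlongrightarrow> 0) (at 0)"
      using d unfolding lc_has_deriv_def by blast
    then show "((\<lambda>h. C * p b (inverse h *\<^sub>C (F (z + h) - F z) - d)) \<longlongrightarrow> 0) (at 0)"
      by (rule tendsto_mult_right_zero)
  qed
  then show ?thesis unfolding DERIV_def by (simp add: LIM_zero_iff)
qed

lemma deriv_strong:
  fixes p :: "'i \<Rightarrow> 'e::cvec \<Rightarrow> real" and g :: "('e \<Rightarrow> complex) \<Rightarrow> complex \<Rightarrow> complex"
  assumes lc: "lcHs p" and sub: "G \<subseteq> lc_dual p" and det: "determines_boundedness p G"
    and hol: "\<forall>e'\<in>G. g e' holomorphic_on ball 0 1"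
    and Fr: "\<forall>z\<in>ball 0 1. \<forall>e'\<in>G. e' (F z) = g e' z"
    and \<Phi>: "\<forall>z\<in>ball 0 1. \<forall>e'\<in>G. e' (\<Phi> z) = deriv (g e') z"
    and z: "z \<in> ball 0 1"
  shows "lc_has_deriv p F (\<Phi> z) z"
proof -
  define r where "r = (1 - norm z) / 2"
  have r0: "0 < r" using z by (simp add: r_def)
  define K where "K = cball z r"
  have Kb: "K \<subseteq> ball 0 1"
  proof
    fix y assume "y \<in> K"
    then have "norm (y - z) \<le> r" by (simp add: K_def dist_norm norm_minus_commute)
    then have "norm y \<le> norm z + r" using norm_triangle_sub[of y z] by linarith
    then show "y \<in> ball 0 1" using z by (simp add: r_def field_simps)
  qed
  have K: "compact K" "convex K" by (auto simp: K_def)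
  have "\<forall>e'\<in>G. \<exists>B\<ge>0. \<forall>a\<in>K. \<forall>b\<in>K. norm (g e' b - g e' a - deriv (g e') a * (b - a)) \<le> B * norm (b - a) ^ 2"
    using taylor2 hol K Kb by blast
  from bchoice[OF this] obtain B where
    B: "\<forall>e'\<in>G. \<forall>a\<in>K. \<forall>b\<in>K. norm (g e' b - g e' a - deriv (g e') a * (b - a)) \<le> B e' * norm (b - a) ^ 2"
    by blast
  define v where "v h = inverse h *\<^sub>C (inverse h *\<^sub>C (F (z + h) - F z) - \<Phi> z)" for h
  define H where "H = {h::complex. h \<noteq> 0 \<and> norm h < r}"
  have zK: "z \<in> K" using r0 by (simp add: K_def)
  have zhK: "z + h \<in> K" if "h \<in> H" for h using that by (simp add: H_def K_def dist_norm)
  have "\<forall>e'\<in>G. bounded (e' ` (v ` H))"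
  proof
    fix e' assume e': "e' \<in> G"
    have ld: "e' \<in> lc_dual p" using e' sub by auto
    show "bounded (e' ` (v ` H))" unfolding bounded_iff
    proof (intro exI ballI)
      fix y assume "y \<in> e' ` v ` H"
      then obtain h where h: "h \<in> H" and y: "y = e' (v h)" by blast
      have h0: "h \<noteq> 0" using h by (simp add: H_def)
      have zb: "z \<in> ball 0 1" "z + h \<in> ball 0 1" using zK zhK[OF h] Kb by auto
      have "y = inverse h * (inverse h * (g e' (z + h) - g e' z) - deriv (g e') z)"
        using Fr \<Phi> e' zb by (simp add: y v_def lf_scale[OF ld] lf_diff[OF ld])
      also have "\<dots> = (g e' (z + h) - g e' z - deriv (g e') z * ((z + h) - z)) / h ^ 2"
        using h0 by (simp add: field_simps power2_eq_square)
      finally have "norm y = norm (g e' (z + h) - g e' z - deriv (g e') z * ((z + h) - z)) / norm h ^ 2"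
        by (simp add: norm_divide norm_power)
      also have "\<dots> \<le> B e' * norm ((z + h) - z) ^ 2 / norm h ^ 2"
      proof -
        have bb: "norm (g e' (z + h) - g e' z - deriv (g e') z * ((z + h) - z)) \<le> B e' * norm ((z + h) - z) ^ 2"
          using B e' zK zhK[OF h] by blast
        show ?thesis using bb by (rule divide_right_mono) simp
      qed
      also have "\<dots> = B e'" using h0 by simp
      finally show "norm y \<le> B e'" .
    qed
  qed
  then have bV: "lc_bounded p (v ` H)" using det unfolding determines_boundedness_def by blast
  show ?thesis unfolding lc_has_deriv_def
  proof
    fix a
    obtain C where C: "\<forall>x\<in>v ` H. p a x \<le> C" using bV unfolding lc_bounded_def by blast
    have ev: "\<forall>\<^sub>F h in at 0. h \<in> H"
      unfolding eventually_at H_def using r0 by (intro exI[of _ r]) (auto simp: dist_norm)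
    show "((\<lambda>h. p a (inverse h *\<^sub>C (F (z + h) - F z) - \<Phi> z)) \<longlongrightarrow> 0) (at 0)"
    proof (rule tendsto_sandwich[of "\<lambda>_. 0" _ _ "\<lambda>h. norm h * C"])
      show "\<forall>\<^sub>F h in at 0. 0 \<le> p a (inverse h *\<^sub>C (F (z + h) - F z) - \<Phi> z)"
        using sn_nonneg[OF lc] by simp
      show "\<forall>\<^sub>F h in at 0. p a (inverse h *\<^sub>C (F (z + h) - F z) - \<Phi> z) \<le> norm h * C"
        using ev
      proof (rule eventually_mono)
        fix h assume h: "h \<in> H"
        then have h0: "h \<noteq> 0" by (simp add: H_def)
        have "inverse h *\<^sub>C (F (z + h) - F z) - \<Phi> z = h *\<^sub>C v h"
          using h0 by (simp add: v_def scaleC_inv_cancel)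
        then have "p a (inverse h *\<^sub>C (F (z + h) - F z) - \<Phi> z) = norm h * p a (v h)"
          by (simp add: sn_scale[OF lc])
        also have "\<dots> \<le> norm h * C" using C h by (intro mult_left_mono) auto
        finally show "p a (inverse h *\<^sub>C (F (z + h) - F z) - \<Phi> z) \<le> norm h * C" .
      qed
      show "((\<lambda>_. 0::real) \<longlongrightarrow> 0) (at 0)" by simp
      show "((\<lambda>h. norm h * C) \<longlongrightarrow> 0) (at (0::complex))"
        by (intro tendsto_mult_left_zero tendsto_norm_zero tendsto_ident_at)
    qed
  qed
qed

lemma global_rep:
  fixes p :: "'i \<Rightarrow> 'e::cvec \<Rightarrow> real" and h :: "('e \<Rightarrow> complex) \<Rightarrow> complex \<Rightarrow> complex"
  assumes lc: "lcHs p" and loc: "locally_complete p" and sub: "G \<subseteq> lc_dual p"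
    and det: "determines_boundedness p G"
    and hol: "\<forall>e'\<in>G. h e' holomorphic_on ball 0 1"
    and w0: "w0 \<in> ball 0 1"
    and lim: "w0 islimpt {z \<in> ball 0 1. \<exists>x. \<forall>e'\<in>G. e' x = h e' z}"
  shows "\<forall>z\<in>ball 0 1. \<exists>x. \<forall>e'\<in>G. e' x = h e' z"
proof -
  define S where "S = {z \<in> ball 0 1. \<exists>x. \<forall>e'\<in>G. e' x = h e' z}"
  define T where "T = ball 0 1 \<inter> {z::complex. z islimpt S}"
  have openT: "open T"
  proof (rule openI)
    fix w assume "w \<in> T"
    then have w: "w \<in> ball 0 1" "w islimpt S" by (auto simp: T_def)
    obtain \<rho> where \<rho>: "\<rho> > 0" "\<forall>z\<in>ball w \<rho>. \<exists>x. \<forall>e'\<in>G. e' x = h e' z"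
      using newton_local[OF lc loc sub det hol w(1) w(2)[unfolded S_def]] by blast
    define e where "e = min \<rho> (1 - norm w)"
    have e0: "0 < e" using \<rho> w by (simp add: e_def)
    have bS: "ball w e \<subseteq> S"
    proof
      fix y assume y: "y \<in> ball w e"
      then have "norm (y - w) < e" by (simp add: dist_norm norm_minus_commute)
      then have "norm y < 1" using norm_triangle_sub[of y w] by (simp add: e_def)
      moreover have "y \<in> ball w \<rho>" using y by (simp add: e_def)
      ultimately show "y \<in> S" using \<rho>(2) by (simp add: S_def)
    qed
    have "ball w e \<subseteq> T"
    proof
      fix y assume y: "y \<in> ball w e"
      have "y \<in> interior S" using interior_maximal[OF bS open_ball] y by blast
      then have "y islimpt S" by (rule interior_limit_point)
      moreover have "y \<in> ball 0 1" using bS y by (auto simp: S_def)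
      ultimately show "y \<in> T" by (simp add: T_def)
    qed
    then show "\<exists>e>0. ball w e \<subseteq> T" using e0 by blast
  qed
  have op: "openin (top_of_set (ball 0 1)) T"
    by (rule open_subset[OF _ openT]) (unfold T_def, rule Int_lower1)
  have cl: "closedin (top_of_set (ball 0 1)) T"
    unfolding T_def by (rule closedin_closed_Int[OF closed_limpts])
  have "w0 \<in> T" unfolding T_def by (intro IntI CollectI w0 lim[folded S_def])
  moreover from connected_ball[of "0::complex" 1, unfolded connected_clopen, rule_format, OF conjI[OF op cl]]
  have "T = {} \<or> T = ball 0 1" .
  ultimately have TT: "T = ball 0 1" by (metis empty_iff)
  show ?thesis
  proof
    fix z :: complex assume z: "z \<in> ball 0 1"
    then have "z \<in> T" using TT by simp
    then have "z islimpt S" unfolding T_def by simp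
    then have "z islimpt {z \<in> ball 0 1. \<exists>x. \<forall>e'\<in>G. e' x = h e' z}" by (simp only: S_def)
    from newton_local[OF lc loc sub det hol z this]
    obtain \<rho> where \<rho>: "\<rho> > 0" "\<forall>y\<in>ball z \<rho>. \<exists>x. \<forall>e'\<in>G. e' x = h e' y"
      by blast
    then show "\<exists>x. \<forall>e'\<in>G. e' x = h e' z" by simp
  qed
qed




theorem mainTheorem6:
  fixes p :: "'i \<Rightarrow> 'e::cvec \<Rightarrow> real"
    and G :: "('e \<Rightarrow> complex) set"
    and \<nu> :: "complex \<Rightarrow> real"
    and U :: "complex set"
    and f0 :: 'e
    and f1 :: "complex \<Rightarrow> 'e"
  assumes lc: "lcHs p"
    and loc_compl: "locally_complete p"
    and G_sub: "G \<subseteq> lc_dual p"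
    and G_lin: "linear_subspace_fun G"
    and G_det: "determines_boundedness p G"
    and \<nu>_cont: "continuous_on (ball 0 1) \<nu>"
    and \<nu>_pos: "\<forall>z\<in>ball 0 1. 0 < \<nu> z"
    and U_sub: "U \<subseteq> ball 0 1"
    and U_acc: "\<exists>z\<in>ball 0 1. z islimpt U"
    and hyp: "\<forall>e'\<in>G. \<exists>g. scalar_bloch \<nu> g \<and> g 0 = e' f0 \<and> (\<forall>z\<in>U. deriv g z = e' (f1 z))"
  shows "(\<exists>F. lc_bloch p \<nu> F \<and> F 0 = f0 \<and> (\<forall>z\<in>U. lc_deriv p F z = f1 z)) \<and>
         (\<forall>F H. lc_bloch p \<nu> F \<and> F 0 = f0 \<and> (\<forall>z\<in>U. lc_deriv p F z = f1 z) \<and>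
                lc_bloch p \<nu> H \<and> H 0 = f0 \<and> (\<forall>z\<in>U. lc_deriv p H z = f1 z)
                \<longrightarrow> (\<forall>z\<in>ball 0 1. F z = H z))"
proof
  obtain w0 where w0: "w0 \<in> ball 0 1" "w0 islimpt U" using U_acc by blast
  have sep: "x = y" if "\<forall>e'\<in>G. e' x = e' y" for x y
    using separation[OF lc G_det G_sub that] .
  show "\<exists>F. lc_bloch p \<nu> F \<and> F 0 = f0 \<and> (\<forall>z\<in>U. lc_deriv p F z = f1 z)"
  proof -
    from bchoice[OF hyp] obtain g where
      gP: "\<forall>e'\<in>G. scalar_bloch \<nu> (g e') \<and> g e' 0 = e' f0 \<and> (\<forall>z\<in>U. deriv (g e') z = e' (f1 z))"
      by blast
    have hol: "\<forall>e'\<in>G. g e' holomorphic_on ball 0 1" using gP by (simp add: scalar_bloch_def)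
    have holh: "\<forall>e'\<in>G. deriv (g e') holomorphic_on ball 0 1"
      using hol by (auto intro: holomorphic_deriv)
    have Usub: "U \<subseteq> {z \<in> ball 0 1. \<exists>x. \<forall>e'\<in>G. e' x = deriv (g e') z}"
    proof
      fix z :: complex assume z: "z \<in> U"
      have "e' (f1 z) = deriv (g e') z" if "e' \<in> G" for e' using gP that z by metis
      then have "\<forall>e'\<in>G. e' (f1 z) = deriv (g e') z" by blast
      moreover have "z \<in> ball 0 1" using U_sub z by blast
      ultimately show "z \<in> {z \<in> ball 0 1. \<exists>x. \<forall>e'\<in>G. e' x = deriv (g e') z}" by blast
    qed
    have lim: "w0 islimpt {z \<in> ball 0 1. \<exists>x. \<forall>e'\<in>G. e' x = deriv (g e') z}"
      by (rule islimpt_subset[OF w0(2) Usub])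
    have repP: "\<forall>z\<in>ball 0 1. \<exists>x. \<forall>e'\<in>G. e' x = deriv (g e') z"
      by (rule global_rep[OF lc loc_compl G_sub G_det holh w0(1) lim])
    define \<Phi> where "\<Phi> z = (SOME x. \<forall>e'\<in>G. e' x = deriv (g e') z)" for z
    have \<Phi>: "\<forall>z\<in>ball 0 1. \<forall>e'\<in>G. e' (\<Phi> z) = deriv (g e') z"
    proof
      fix z assume "z \<in> ball (0::complex) 1"
      then have "\<exists>x. \<forall>e'\<in>G. e' x = deriv (g e') z" using repP by blast
      then show "\<forall>e'\<in>G. e' (\<Phi> z) = deriv (g e') z" unfolding \<Phi>_def by (rule someI_ex)
    qed
    have f0g: "\<forall>e'\<in>G. e' f0 = g e' 0" using gP by metis
    have repF: "\<forall>z\<in>ball 0 1. \<exists>x. \<forall>e'\<in>G. e' x = g e' z"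
      using riemann[OF lc loc_compl G_sub G_det hol \<Phi> f0g] by blast
    define F where "F z = (SOME x. \<forall>e'\<in>G. e' x = g e' z)" for z
    have Fr: "\<forall>z\<in>ball 0 1. \<forall>e'\<in>G. e' (F z) = g e' z"
    proof
      fix z assume "z \<in> ball (0::complex) 1"
      then have "\<exists>x. \<forall>e'\<in>G. e' x = g e' z" using repF by blast
      then show "\<forall>e'\<in>G. e' (F z) = g e' z" unfolding F_def by (rule someI_ex)
    qed
    have F0: "F 0 = f0"
    proof (rule sep, intro ballI)
      fix e' assume e': "e' \<in> G"
      have "e' (F 0) = g e' 0" using Fr e' by simp
      also have "\<dots> = e' f0" using f0g e' by metis
      finally show "e' (F 0) = e' f0" .
    qed
    have hasd: "\<forall>z\<in>ball 0 1. lc_has_deriv p F (\<Phi> z) z"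
      using deriv_strong[OF lc G_sub G_det hol Fr \<Phi>] by blast
    have ld: "\<forall>z\<in>ball 0 1. lc_deriv p F z = \<Phi> z"
      using hasd lc_deriv_eq[OF lc] by blast
    have onU: "\<forall>z\<in>U. lc_deriv p F z = f1 z"
    proof
      fix z :: complex assume z: "z \<in> U"
      then have zb: "z \<in> ball 0 1" using U_sub by auto
      have "\<Phi> z = f1 z"
      proof (rule sep, intro ballI)
        fix e' assume e': "e' \<in> G"
        have "e' (\<Phi> z) = deriv (g e') z" using \<Phi> zb e' by blast
        also have "\<dots> = e' (f1 z)" using gP e' z by blast
        finally show "e' (\<Phi> z) = e' (f1 z)" .
      qed
      then show "lc_deriv p F z = f1 z" using ld zb by simp
    qed
    have bloch: "lc_bloch p \<nu> F" unfolding lc_bloch_def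
    proof (intro conjI allI)
      show "lc_holomorphic p F" unfolding lc_holomorphic_def using hasd by blast
      fix a
      have "\<forall>e'\<in>G. \<exists>C. \<forall>z\<in>ball 0 1. norm (deriv (g e') z) * \<nu> z \<le> C"
        using gP by (simp add: scalar_bloch_def)
      from bchoice[OF this] obtain Cg where Cg: "\<forall>e'\<in>G. \<forall>z\<in>ball 0 1. norm (deriv (g e') z) * \<nu> z \<le> Cg e'"
        by blast
      define V where "V = (\<lambda>z. complex_of_real (\<nu> z) *\<^sub>C \<Phi> z) ` ball 0 1"
      have "\<forall>e'\<in>G. bounded (e' ` V)"
      proof
        fix e' assume e': "e' \<in> G"
        have lde: "e' \<in> lc_dual p" using e' G_sub by auto
        show "bounded (e' ` V)" unfolding bounded_iff
        proof (intro exI ballI)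
          fix y assume "y \<in> e' ` V"
          then obtain z where z: "z \<in> ball 0 1" and y: "y = e' (complex_of_real (\<nu> z) *\<^sub>C \<Phi> z)"
            unfolding V_def by blast
          have "y = complex_of_real (\<nu> z) * deriv (g e') z" using \<Phi> z e' by (simp add: y lf_scale[OF lde])
          moreover have "0 < \<nu> z" using \<nu>_pos z by blast
          ultimately have "norm y = norm (deriv (g e') z) * \<nu> z" by (simp add: norm_mult)
          also have "\<dots> \<le> Cg e'" using Cg e' z by blast
          finally show "norm y \<le> Cg e'" .
        qed
      qed
      then have "lc_bounded p V" using G_det unfolding determines_boundedness_def by blast
      then obtain C where C: "\<forall>x\<in>V. p a x \<le> C" unfolding lc_bounded_def by blast
      have "\<forall>z\<in>ball 0 1. p a (lc_deriv p F z) * \<nu> z \<le> C"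
      proof
        fix z :: complex assume z: "z \<in> ball 0 1"
        have "p a (lc_deriv p F z) * \<nu> z = p a (complex_of_real (\<nu> z) *\<^sub>C \<Phi> z)"
        proof -
          have "0 < \<nu> z" using \<nu>_pos z by blast
          moreover have "lc_deriv p F z = \<Phi> z" using ld z by blast
          ultimately show ?thesis by (simp add: sn_scale[OF lc] mult.commute)
        qed
        also have "\<dots> \<le> C" using C z unfolding V_def by blast
        finally show "p a (lc_deriv p F z) * \<nu> z \<le> C" .
      qed
      then show "\<exists>C. p a (F 0) \<le> C \<and> (\<forall>z\<in>ball 0 1. p a (lc_deriv p F z) * \<nu> z \<le> C)"
        by (intro exI[of _ "max (p a (F 0)) C"]) (auto intro: order_trans)
    qed
    show ?thesis using bloch F0 onU by blast
  qed
  show "\<forall>F H. lc_bloch p \<nu> F \<and> F 0 = f0 \<and> (\<forall>z\<in>U. lc_deriv p F z = f1 z) \<and>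
                lc_bloch p \<nu> H \<and> H 0 = f0 \<and> (\<forall>z\<in>U. lc_deriv p H z = f1 z)
                \<longrightarrow> (\<forall>z\<in>ball 0 1. F z = H z)"
  proof (intro allI impI ballI)
    fix F H and z :: complex
    assume A: "lc_bloch p \<nu> F \<and> F 0 = f0 \<and> (\<forall>z\<in>U. lc_deriv p F z = f1 z) \<and>
                lc_bloch p \<nu> H \<and> H 0 = f0 \<and> (\<forall>z\<in>U. lc_deriv p H z = f1 z)"
    assume z: "z \<in> ball 0 1"
    have hF: "\<forall>y\<in>ball 0 1. lc_has_deriv p F (lc_deriv p F y) y"
    proof
      fix y :: complex assume "y \<in> ball 0 1"
      then obtain d where d: "lc_has_deriv p F d y"
        using A unfolding lc_bloch_def lc_holomorphic_def by blast
      then show "lc_has_deriv p F (lc_deriv p F y) y" using lc_deriv_eq[OF lc d] by simp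
    qed
    have hH: "\<forall>y\<in>ball 0 1. lc_has_deriv p H (lc_deriv p H y) y"
    proof
      fix y :: complex assume "y \<in> ball 0 1"
      then obtain d where d: "lc_has_deriv p H d y"
        using A unfolding lc_bloch_def lc_holomorphic_def by blast
      then show "lc_has_deriv p H (lc_deriv p H y) y" using lc_deriv_eq[OF lc d] by simp
    qed
    show "F z = H z"
    proof (rule sep, intro ballI)
      fix e' assume e': "e' \<in> G"
      have lde: "e' \<in> lc_dual p" using e' G_sub by auto
      define u where "u y = e' (F y) - e' (H y)" for y
      define du where "du y = e' (lc_deriv p F y) - e' (lc_deriv p H y)" for y
      have ud: "(u has_field_derivative du y) (at y)" if "y \<in> ball 0 1" for y
        unfolding u_def du_def
        using weak_deriv[OF lc lde hF[rule_format, OF that]] weak_deriv[OF lc lde hH[rule_format, OF that]]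
        by (rule DERIV_diff)
      have uhol: "u holomorphic_on ball 0 1"
        unfolding holomorphic_on_def field_differentiable_def
        using ud has_field_derivative_at_within by blast
      have dd: "deriv u y = du y" if "y \<in> ball 0 1" for y using ud[OF that] by (rule DERIV_imp_deriv)
      have dhol: "deriv u holomorphic_on ball 0 1" using uhol by (rule holomorphic_deriv) simp
      have zero: "deriv u y = 0" if "y \<in> ball 0 1" for y
      proof (rule analytic_continuation[OF dhol open_ball connected_ball U_sub w0(1) w0(2) _ that])
        fix x assume x: "x \<in> U"
        then have "x \<in> ball 0 1" using U_sub by auto
        then show "deriv u x = 0" using dd A x by (simp add: du_def)
      qed
      have "\<exists>c. \<forall>x\<in>ball 0 1. u x = c"
      proof (rule has_field_derivative_zero_constant[OF convex_ball])
        fix x assume x: "x \<in> ball (0::complex) 1"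
        have "(u has_field_derivative du x) (at x)" by (rule ud[OF x])
        then have "(u has_field_derivative 0) (at x)" using dd[OF x] zero[OF x] by simp
        then show "(u has_field_derivative 0) (at x within ball 0 1)" by (rule has_field_derivative_at_within)
      qed
      then obtain c where c: "\<forall>x\<in>ball 0 1. u x = c" by blast
      have "u 0 = 0" using A by (simp add: u_def)
      then have "c = 0" using c by simp
      then have "u z = 0" using c z by simp
      then show "e' (F z) = e' (H z)" by (simp add: u_def)
    qed
  qed
qed


end
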